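(* Let $N\ge 2$ and let $y_1,\dots,y_N$, $r_1,\dots,r_N$ be arbitrary real constants. For each integer $j$ let $\bm{x}_j$ be the $N$-dimensional column vector $\bm{x}_j=(|y_1+jr_1|,\,|y_2+jr_2|,\,\dots,\,|y_N+jr_N|)^T$. For a set $J=\{j_1<j_2<\dots<j_N\}$ of $N$ integers write $U(J)=\max[\bm{x}_{j_1}\ \bm{x}_{j_2}\ \dots\ \bm{x}_{j_N}]$ (ultradiscrete permanent). Then for all integers $1\le k_1<k_2<k_3\le N+1$, \[ U(\{1,\dots,N+1\}\setminus\{k_2\})+U(\{1,\dots,N+2\}\setminus\{k_1,k_3\}) \] \[ =\max\Bigl(U(\{1,\dots,N+1\}\setminus\{k_3\})+U(\{1,\dots,N+2\}\setminus\{k_1,k_2\}),\ U(\{1,\dots,N+1\}\setminus\{k_1\})+U(\{1,\dots,N+2\}\setminus\{k_2,k_3\})\Bigr). \]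
   Context: Ultradiscrete permanent (UP): for a real $N\times N$ matrix $A=(a_{ij})$, $\max A=\max[a_{ij}]_{1\le i,j\le N}\equiv\max_{\pi}\sum_{i=1}^N a_{i\pi(i)}$, the maximum over all permutations $\pi$ of $\{1,\dots,N\}$. For column vectors $\bm{b}_1,\dots,\bm{b}_N\in\mathbb{R}^N$, $\max[\bm{b}_1\ \dots\ \bm{b}_N]$ is the UP of the matrix with these columns. *)

theory Defs
  imports Complex_Main "HOL-Combinatorics.Permutations"
begin

definition UP :: "nat \<Rightarrow> (nat \<Rightarrow> nat \<Rightarrow> real) \<Rightarrow> real" where
  "UP N a = Max {(\<Sum>i<N. a i (\<pi> i)) | \<pi>. \<pi> permutes {..<N}}"

text \<open>x_j = (|y_1 + j r_1|, ..., |y_N + j r_N|)^T; row i (0-based) corresponds to index i+1.\<close>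
definition xvec :: "(nat \<Rightarrow> real) \<Rightarrow> (nat \<Rightarrow> real) \<Rightarrow> int \<Rightarrow> nat \<Rightarrow> real" where
  "xvec y r j i = \<bar>y i + of_int j * r i\<bar>"

definition Uset :: "nat \<Rightarrow> (nat \<Rightarrow> real) \<Rightarrow> (nat \<Rightarrow> real) \<Rightarrow> int set \<Rightarrow> real" where
  "Uset N y r J = UP N (\<lambda>i c. xvec y r (sorted_list_of_set J ! c) i)"

end

theory Submission
  imports Defs
begin

lemma sum_set_eq:
  assumes "finite J" "card J = N"
  shows "{(\<Sum>i<N. (\<lambda>i c. xvec y r (sorted_list_of_set J ! c) i) i (\<pi> i)) | \<pi>. \<pi> permutes {..<N}}
       = {(\<Sum>i<N. xvec y r (f i) i) | f. bij_betw f {..<N} J}" (is "?A = ?B")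
proof -
  let ?sl = "sorted_list_of_set J"
  have len: "length ?sl = N" using assms by simp
  have bn: "bij_betw ((!) ?sl) {..<N} J"
    by (rule bij_betw_nth) (use assms len in auto)
  show ?thesis
  proof
    show "?A \<subseteq> ?B"
    proof
      fix z assume "z \<in> ?A"
      then obtain \<pi> where pi: "\<pi> permutes {..<N}" and z: "z = (\<Sum>i<N. xvec y r (?sl ! \<pi> i) i)" by auto
      have "bij_betw (\<lambda>i. ?sl ! \<pi> i) {..<N} J"
        using bij_betw_trans[OF permutes_imp_bij[OF pi] bn] by (simp add: comp_def)
      then show "z \<in> ?B" using z by (auto intro!: exI[where x="\<lambda>i. ?sl ! \<pi> i"])
    qed
  next
    show "?B \<subseteq> ?A"
    proof
      fix z assume "z \<in> ?B"
      then obtain f where f: "bij_betw f {..<N} J" and z: "z = (\<Sum>i<N. xvec y r (f i) i)" by auto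
      define \<pi> where "\<pi> i = (if i < N then the_inv_into {..<N} ((!) ?sl) (f i) else i)" for i
      have bi: "bij_betw (the_inv_into {..<N} ((!) ?sl)) J {..<N}" by (rule bij_betw_the_inv_into[OF bn])
      have b1: "bij_betw (the_inv_into {..<N} ((!) ?sl) \<circ> f) {..<N} {..<N}"
        by (rule bij_betw_trans[OF f bi])
      have "bij_betw \<pi> {..<N} {..<N}"
        using b1 by (rule bij_betw_cong[THEN iffD1, rotated]) (auto simp: \<pi>_def)
      then have pi: "\<pi> permutes {..<N}" by (rule bij_imp_permutes) (auto simp: \<pi>_def)
      have "\<And>i. i < N \<Longrightarrow> ?sl ! \<pi> i = f i"
        unfolding \<pi>_def using f_the_inv_into_f_bij_betw[OF bn] f
        by (auto simp: bij_betw_def)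
      then have "z = (\<Sum>i<N. xvec y r (?sl ! \<pi> i) i)" unfolding z by (intro sum.cong) auto
      then show "z \<in> ?A" using pi by blast
    qed
  qed
qed

lemma Uset_eq:
  assumes "finite J" "card J = N"
  shows "Uset N y r J = Max {(\<Sum>i<N. xvec y r (f i) i) | f. bij_betw f {..<N} J}"
  unfolding Uset_def UP_def using sum_set_eq[OF assms] by simp

lemma fin_set: "finite {(\<Sum>i<N. xvec y r (f i) i) | f. bij_betw f {..<N} J}" if "finite J" "card J = N"
  using sum_set_eq[OF that, of y r, symmetric] by (simp add: finite_permutations)

lemma Uset_ge:
  assumes "finite J" "card J = N" "bij_betw f {..<N} J"
  shows "(\<Sum>i<N. xvec y r (f i) i) \<le> Uset N y r J"
  unfolding Uset_eq[OF assms(1,2)] using fin_set[OF assms(1,2)] assms(3) by (intro Max_ge) auto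

lemma Uset_opt:
  assumes "finite J" "card J = N"
  shows "\<exists>f. bij_betw f {..<N} J \<and> Uset N y r J = (\<Sum>i<N. xvec y r (f i) i)"
proof -
  obtain h where "bij_betw h {..<N} J" using finite_same_card_bij[of "{..<N}" J] assms by auto
  then have ne: "{(\<Sum>i<N. xvec y r (f i) i) | f. bij_betw f {..<N} J} \<noteq> {}" by blast
  show ?thesis using Max_in[OF fin_set[OF assms] ne] unfolding Uset_eq[OF assms] by auto
qed


definition val :: "(nat \<Rightarrow> int \<Rightarrow> real) \<Rightarrow> nat \<Rightarrow> (nat\<Rightarrow>int) \<Rightarrow> (nat\<Rightarrow>int) \<Rightarrow> real" where
  "val G N p q = (\<Sum>i<N. G i (p i) + G i (q i))"

lemma absdiff_lin: fixes x1 x2 y r :: real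
  shows "\<bar>\<bar>y + x1*r\<bar> - \<bar>y + x2*r\<bar>\<bar> \<le> \<bar>x1 - x2\<bar> * \<bar>r\<bar>"
proof -
  have "(y + x1*r) - (y + x2*r) = (x1 - x2) * r" by (simp add: algebra_simps)
  then have "\<bar>(y + x1*r) - (y + x2*r)\<bar> = \<bar>x1 - x2\<bar> * \<bar>r\<bar>" by (simp add: abs_mult)
  moreover have "\<bar>\<bar>y + x1*r\<bar> - \<bar>y + x2*r\<bar>\<bar> \<le> \<bar>(y + x1*r) - (y + x2*r)\<bar>" by (rule abs_triangle_ineq3)
  ultimately show ?thesis by simp
qed

lemma qcx: fixes x1 x2 x3 y1 y2 r1 r2 :: real
  assumes "x1 < x2" "x2 < x3" "\<bar>r2\<bar> \<le> \<bar>r1\<bar>"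
  shows "\<bar>y1+x2*r1\<bar> - \<bar>y2+x2*r2\<bar> \<le> max (\<bar>y1+x1*r1\<bar> - \<bar>y2+x1*r2\<bar>) (\<bar>y1+x3*r1\<bar> - \<bar>y2+x3*r2\<bar>)"
proof -
  have e1: "(y1+x1*r1) - (y1+x2*r1) = -((x2-x1)*r1)" by (simp add: algebra_simps)
  have e3: "(y1+x3*r1) - (y1+x2*r1) = (x3-x2)*r1" by (simp add: algebra_simps)
  have p1: "x2 - x1 > 0" "x3 - x2 > 0" using assms by auto
  have A0: "\<And>a1 a2 a3 s1 s3::real. a1 = a2 - s1 \<Longrightarrow> a3 = a2 + s3 \<Longrightarrow> (s1 \<ge> 0 \<and> s3 \<ge> 0) \<or> (s1 \<le> 0 \<and> s3 \<le> 0) \<Longrightarrow>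
      \<bar>a1\<bar> - \<bar>a2\<bar> = \<bar>s1\<bar> \<or> \<bar>a3\<bar> - \<bar>a2\<bar> = \<bar>s3\<bar>" by linarith
  have sg: "((x2-x1)*r1 \<ge> 0 \<and> (x3-x2)*r1 \<ge> 0) \<or> ((x2-x1)*r1 \<le> 0 \<and> (x3-x2)*r1 \<le> 0)"
    using p1 by (cases "r1 \<ge> 0") (auto simp: mult_nonneg_nonpos)
  have ab: "\<bar>(x2-x1)*r1\<bar> = (x2-x1)*\<bar>r1\<bar>" "\<bar>(x3-x2)*r1\<bar> = (x3-x2)*\<bar>r1\<bar>" using p1 by (auto simp: abs_mult)
  have A: "\<bar>y1+x1*r1\<bar> - \<bar>y1+x2*r1\<bar> = (x2-x1)*\<bar>r1\<bar> \<or> \<bar>y1+x3*r1\<bar> - \<bar>y1+x2*r1\<bar> = (x3-x2)*\<bar>r1\<bar>"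
    using A0[of "y1+x1*r1" "y1+x2*r1" "(x2-x1)*r1" "y1+x3*r1" "(x3-x2)*r1", OF _ _ sg] e1 e3 ab by linarith
  have B1: "\<bar>y2+x1*r2\<bar> - \<bar>y2+x2*r2\<bar> \<le> (x2-x1)*\<bar>r2\<bar>"
    using absdiff_lin[of y2 x1 r2 x2] p1 by auto
  have B3: "\<bar>y2+x3*r2\<bar> - \<bar>y2+x2*r2\<bar> \<le> (x3-x2)*\<bar>r2\<bar>"
    using absdiff_lin[of y2 x3 r2 x2] p1 by auto
  have m1: "(x2-x1)*\<bar>r2\<bar> \<le> (x2-x1)*\<bar>r1\<bar>" using p1 assms(3) by (intro mult_left_mono) auto
  have m3: "(x3-x2)*\<bar>r2\<bar> \<le> (x3-x2)*\<bar>r1\<bar>" using p1 assms(3) by (intro mult_left_mono) auto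
  from A show ?thesis
  proof
    assume h: "\<bar>y1+x1*r1\<bar> - \<bar>y1+x2*r1\<bar> = (x2-x1)*\<bar>r1\<bar>"
    have "\<bar>y1+x2*r1\<bar> - \<bar>y2+x2*r2\<bar> \<le> \<bar>y1+x1*r1\<bar> - \<bar>y2+x1*r2\<bar>" using h B1 m1 by linarith
    then show ?thesis by (rule order_trans) (rule max.cobounded1)
  next
    assume h: "\<bar>y1+x3*r1\<bar> - \<bar>y1+x2*r1\<bar> = (x3-x2)*\<bar>r1\<bar>"
    have "\<bar>y1+x2*r1\<bar> - \<bar>y2+x2*r2\<bar> \<le> \<bar>y1+x3*r1\<bar> - \<bar>y2+x3*r2\<bar>" using h B3 m3 by linarith
    then show ?thesis by (rule order_trans) (rule max.cobounded2)
  qed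
qed

lemma vlem: fixes u w v w' y1 y2 r1 r2 :: real
  assumes "u < w" "w < v" "w' < u \<or> v < w'"
  defines "\<phi> \<equiv> \<lambda>x. \<bar>y1+x*r1\<bar> - \<bar>y2+x*r2\<bar>"
  shows "\<phi> w \<ge> \<phi> u \<or> \<phi> w \<ge> \<phi> v \<or> \<phi> w' \<ge> \<phi> u \<or> \<phi> w' \<ge> \<phi> v"
proof (cases "\<bar>r2\<bar> \<le> \<bar>r1\<bar>")
  case True
  show ?thesis using assms(3)
  proof
    assume "w' < u"
    then show ?thesis using qcx[OF \<open>w' < u\<close> assms(1) True, of y1 y2] unfolding \<phi>_def max_def by (auto split: if_splits)
  next
    assume "v < w'"
    then show ?thesis using qcx[OF assms(2) \<open>v < w'\<close> True, of y1 y2] unfolding \<phi>_def max_def by (auto split: if_splits)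
  qed
next
  case False
  then show ?thesis using qcx[OF assms(1,2), of r1 r2 y2 y1] unfolding \<phi>_def max_def by (auto split: if_splits)
qed

lemma ivt: fixes f :: "nat \<Rightarrow> int"
  shows "f 0 < b \<Longrightarrow> b < f k \<Longrightarrow> (\<forall>j\<le>k. f j \<noteq> b) \<Longrightarrow> \<exists>s<k. f s < b \<and> b < f (Suc s)"
proof (induction k)
  case 0 then show ?case by simp
next
  case (Suc k)
  show ?case
  proof (cases "f k < b")
    case True then show ?thesis using Suc.prems by auto
  next
    case False
    have "f k \<noteq> b" using Suc.prems(3) by simp
    then have "b < f k" using False by simp
    then obtain s where "s < k" "f s < b \<and> b < f (Suc s)" using Suc by auto
    then show ?thesis by (intro exI[of _ s]) auto
  qed
qed

lemma exitl: "P (0::nat) \<Longrightarrow> \<not> P l \<Longrightarrow> \<exists>t<l. P t \<and> \<not> P (Suc t)"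
proof (induction l)
  case 0 then show ?case by simp
next
  case (Suc l)
  show ?case
  proof (cases "P l")
    case True then show ?thesis using Suc.prems by auto
  next
    case False
    then obtain t where "t < l" "P t \<and> \<not> P (Suc t)" using Suc by auto
    then show ?thesis by (intro exI[of _ t]) auto
  qed
qed

locale conf =
  fixes N :: nat and p q :: "nat \<Rightarrow> int" and X Y :: "int set"
  assumes bp: "bij_betw p {..<N} X" and bq: "bij_betw q {..<N} Y"
begin

definition nx :: "int \<Rightarrow> int" where "nx c = q (inv_into {..<N} p c)"

lemma finX: "finite X" using bp bij_betw_finite by blast
lemma finY: "finite Y" using bq bij_betw_finite by blast
lemma injp: "inj_on p {..<N}" using bp by (simp add: bij_betw_def)
lemma injq: "inj_on q {..<N}" using bq by (simp add: bij_betw_def)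
lemma imp: "p ` {..<N} = X" using bp by (simp add: bij_betw_def)
lemma imq: "q ` {..<N} = Y" using bq by (simp add: bij_betw_def)
lemma pX: "i < N \<Longrightarrow> p i \<in> X" using imp by auto
lemma qY: "i < N \<Longrightarrow> q i \<in> Y" using imq by auto

lemma inv_p: "c \<in> X \<Longrightarrow> inv_into {..<N} p c < N \<and> p (inv_into {..<N} p c) = c"
  using imp injp by (auto simp: inv_into_f_f)

lemma row_of: "c \<in> X \<Longrightarrow> \<exists>i<N. p i = c" using imp by auto

lemma nx_p: "i < N \<Longrightarrow> nx (p i) = q i"
  unfolding nx_def using inv_into_f_f[OF injp] by simp

lemma nx_Y: "c \<in> X \<Longrightarrow> nx c \<in> Y"
  using row_of nx_p qY by force

lemma nx_inj: "c \<in> X \<Longrightarrow> c' \<in> X \<Longrightarrow> nx c = nx c' \<Longrightarrow> c = c'"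
proof -
  assume a: "c \<in> X" "c' \<in> X" "nx c = nx c'"
  obtain i where i: "i<N" "p i = c" using row_of a(1) by blast
  obtain i' where i': "i'<N" "p i' = c'" using row_of a(2) by blast
  have "q i = q i'" using a(3) nx_p i i' by metis
  then have "i = i'" using injq i i' by (auto dest: inj_onD)
  then show ?thesis using i i' by simp
qed

definition path :: "int \<Rightarrow> nat \<Rightarrow> bool" where
  "path x k \<longleftrightarrow> x \<in> X - Y \<and> (nx^^k) x \<in> Y - X \<and> (\<forall>j<k. (nx^^j) x \<in> X)"

lemma iter_Y: "(\<forall>i<j. (nx^^i) x \<in> X) \<Longrightarrow> 0 < j \<Longrightarrow> (nx^^j) x \<in> Y"
proof -
  assume a: "\<forall>i<j. (nx^^i) x \<in> X" "0 < j"
  then obtain j0 where j: "j = Suc j0" by (cases j) auto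
  then show ?thesis using a nx_Y[of "(nx^^j0) x"] by simp
qed

lemma cancel: "(\<forall>i<j. (nx^^i) x \<in> X) \<Longrightarrow> (\<forall>i<j. (nx^^i) x' \<in> X) \<Longrightarrow> (nx^^j) x = (nx^^j) x' \<Longrightarrow> x = x'"
proof (induction j)
  case 0 then show ?case by simp
next
  case (Suc j)
  have "(nx^^j) x = (nx^^j) x'"
    using Suc.prems nx_inj[of "(nx^^j) x" "(nx^^j) x'"] by simp
  then show ?case using Suc by simp
qed

lemma cancel2:
  assumes "j \<le> j'" "\<forall>i<j. (nx^^i) x \<in> X" "\<forall>i<j'. (nx^^i) x' \<in> X" "(nx^^j) x = (nx^^j') x'"
  shows "x = (nx^^(j'-j)) x'"
proof -
  have e: "(nx^^j') x' = (nx^^j) ((nx^^(j'-j)) x')"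
  proof -
    have "j' = j + (j'-j)" using assms(1) by simp
    then have "(nx^^j') x' = (nx^^(j + (j'-j))) x'" by simp
    also have "\<dots> = (nx^^j) ((nx^^(j'-j)) x')" by (simp add: funpow_add)
    finally show ?thesis .
  qed
  have "\<forall>i<j. (nx^^i) ((nx^^(j'-j)) x') \<in> X"
  proof (intro allI impI)
    fix i assume "i < j"
    then have "i + (j'-j) < j'" using assms(1) by simp
    moreover have "(nx^^i) ((nx^^(j'-j)) x') = (nx^^(i + (j'-j))) x'" by (simp add: funpow_add)
    ultimately show "(nx^^i) ((nx^^(j'-j)) x') \<in> X" using assms(3) by simp
  qed
  then show ?thesis using cancel[OF assms(2)] assms(4) e by simp
qed

lemma path_k0: "path x k \<Longrightarrow> 0 < k"
  unfolding path_def by (cases k) auto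

lemma path_dist:
  assumes "path x k" "j < j'" "j' \<le> k"
  shows "(nx^^j) x \<noteq> (nx^^j') x"
proof
  assume h: "(nx^^j) x = (nx^^j') x"
  have X: "\<forall>i<j'. (nx^^i) x \<in> X" using assms unfolding path_def by auto
  have "x = (nx^^(j'-j)) x" using cancel2[of j j' x x] assms(2) X h by auto
  moreover have "(nx^^(j'-j)) x \<in> Y" using iter_Y[of "j'-j" x] X assms(2) by auto
  ultimately show False using assms(1) unfolding path_def by auto
qed

lemma path_disj:
  assumes "path x k" "path x' k'" "x \<noteq> x'" "j \<le> k" "j' \<le> k'"
  shows "(nx^^j) x \<noteq> (nx^^j') x'"
proof
  assume h: "(nx^^j) x = (nx^^j') x'"
  have X: "\<forall>i<j. (nx^^i) x \<in> X" using assms unfolding path_def by auto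
  have X': "\<forall>i<j'. (nx^^i) x' \<in> X" using assms unfolding path_def by auto
  show False
  proof (cases "j \<le> j'")
    case True
    then have e: "x = (nx^^(j'-j)) x'" using cancel2 X X' h by blast
    show False
    proof (cases "j = j'")
      case True then show False using e assms(3) by simp
    next
      case False
      then have "(nx^^(j'-j)) x' \<in> Y" using iter_Y[of "j'-j" x'] X' \<open>j \<le> j'\<close> by auto
      then show False using e assms(1) unfolding path_def by auto
    qed
  next
    case False
    then have e: "x' = (nx^^(j-j')) x" using cancel2[of j' j x' x] X X' h by auto
    have "(nx^^(j-j')) x \<in> Y" using iter_Y[of "j-j'" x] X False by auto
    then show False using e assms(2) unfolding path_def by auto
  qed
qed

lemma path_ex:
  assumes "x \<in> X - Y"
  shows "\<exists>k. path x k"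
proof -
  have "\<exists>j. (nx^^j) x \<notin> X"
  proof (rule ccontr)
    assume "\<not> ?thesis"
    then have all: "\<And>j. (nx^^j) x \<in> X" by blast
    have "\<not> inj_on (\<lambda>j. (nx^^j) x) {..card X}"
    proof
      assume "inj_on (\<lambda>j. (nx^^j) x) {..card X}"
      then have "card ((\<lambda>j. (nx^^j) x) ` {..card X}) = card {..card X}" by (rule card_image)
      moreover have "card ((\<lambda>j. (nx^^j) x) ` {..card X}) \<le> card X"
        using all finX by (intro card_mono) auto
      ultimately show False by simp
    qed
    then obtain j j' where jj: "j \<noteq> j'" "(nx^^j) x = (nx^^j') x" unfolding inj_on_def by blast
    have gen: "\<And>j j'. j < j' \<Longrightarrow> (nx^^j) x = (nx^^j') x \<Longrightarrow> False"
    proof -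
      fix j j' :: nat assume a: "j < j'" "(nx^^j) x = (nx^^j') x"
      have "x = (nx^^(j'-j)) x" using cancel2[of j j' x x] a all by auto
      moreover have "(nx^^(j'-j)) x \<in> Y" using iter_Y[of "j'-j" x] all a by auto
      ultimately show False using assms by auto
    qed
    show False using jj gen[of j j'] gen[of j' j] by (cases "j < j'") auto
  qed
  then have ex: "\<exists>j. (nx^^j) x \<notin> X" .
  define k where "k = (LEAST j. (nx^^j) x \<notin> X)"
  have k1: "(nx^^k) x \<notin> X" unfolding k_def using LeastI_ex[OF ex] .
  have k2: "\<forall>j<k. (nx^^j) x \<in> X" unfolding k_def using not_less_Least by blast
  have "0 < k" using k1 assms by (cases k) auto
  then have "(nx^^k) x \<in> Y" using iter_Y k2 by blast
  then show ?thesis using k1 k2 assms unfolding path_def by blast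
qed

definition T :: "int \<Rightarrow> nat \<Rightarrow> int set" where "T x k = (\<lambda>j. (nx^^j) x) ` {..<k}"
definition sp :: "int \<Rightarrow> nat \<Rightarrow> nat \<Rightarrow> int" where "sp x k i = (if p i \<in> T x k then q i else p i)"
definition sq :: "int \<Rightarrow> nat \<Rightarrow> nat \<Rightarrow> int" where "sq x k i = (if p i \<in> T x k then p i else q i)"

lemma T_X: "path x k \<Longrightarrow> T x k \<subseteq> X" unfolding T_def path_def by auto

lemma x_T: "path x k \<Longrightarrow> x \<in> T x k"
  using path_k0[of x k] unfolding T_def by (auto intro!: image_eqI[where x=0])

lemma T_q: "path x k \<Longrightarrow> i < N \<Longrightarrow> p i \<in> T x k \<Longrightarrow> \<exists>j<k. p i = (nx^^j) x \<and> q i = (nx^^Suc j) x"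
proof -
  assume a: "path x k" "i < N" "p i \<in> T x k"
  then obtain j where j: "j < k" "p i = (nx^^j) x" unfolding T_def by auto
  have "q i = (nx^^Suc j) x" using nx_p[OF a(2)] j by simp
  then show ?thesis using j by blast
qed

lemma TmY: "path x k \<Longrightarrow> T x k - {x} \<subseteq> Y"
proof
  fix z assume a: "path x k" "z \<in> T x k - {x}"
  then obtain j where j: "j < k" "z = (nx^^j) x" unfolding T_def by auto
  have "j \<noteq> 0" using a j by (cases j) auto
  then show "z \<in> Y" using iter_Y[of j x] a(1) j \<open>j \<noteq> 0\<close> unfolding path_def by auto
qed

lemma e_nT: "path x k \<Longrightarrow> (nx^^k) x \<notin> T x k" using T_X unfolding path_def by blast

lemma qT_img: assumes "path x k"
  shows "q ` {i\<in>{..<N}. p i \<in> T x k} = (T x k - {x}) \<union> {(nx^^k) x}"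
proof
  show "q ` {i\<in>{..<N}. p i \<in> T x k} \<subseteq> (T x k - {x}) \<union> {(nx^^k) x}"
  proof
    fix z assume "z \<in> q ` {i\<in>{..<N}. p i \<in> T x k}"
    then obtain i where i: "i < N" "p i \<in> T x k" "z = q i" by auto
    then obtain j where j: "j < k" "q i = (nx^^Suc j) x" using T_q[OF assms] by blast
    show "z \<in> (T x k - {x}) \<union> {(nx^^k) x}"
    proof (cases "Suc j = k")
      case True then show ?thesis using i j by simp
    next
      case False
      then have "z \<in> T x k" using i j unfolding T_def by (auto intro!: image_eqI[where x="Suc j"])
      moreover have "z \<in> Y" using i qY by auto
      ultimately show ?thesis using assms unfolding path_def by auto
    qed
  qed
next
  show "(T x k - {x}) \<union> {(nx^^k) x} \<subseteq> q ` {i\<in>{..<N}. p i \<in> T x k}"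
  proof
    fix z assume z: "z \<in> (T x k - {x}) \<union> {(nx^^k) x}"
    have "\<exists>j0<k. z = (nx^^Suc j0) x"
    proof (cases "z = (nx^^k) x")
      case True
      obtain k0 where "k = Suc k0" using path_k0[OF assms] by (cases k) auto
      then show ?thesis using True by auto
    next
      case False
      then obtain j where j: "j < k" "z = (nx^^j) x" "z \<noteq> x" using z unfolding T_def by auto
      then obtain j0 where "j = Suc j0" by (cases j) auto
      then show ?thesis using j by (intro exI[of _ j0]) auto
    qed
    then obtain j0 where j0: "j0 < k" "z = (nx^^Suc j0) x" by blast
    have "(nx^^j0) x \<in> X" using assms j0 unfolding path_def by auto
    then obtain i where i: "i < N" "p i = (nx^^j0) x" using row_of by blast
    have "p i \<in> T x k" using i j0 unfolding T_def by auto
    moreover have "q i = z" using nx_p[OF i(1)] i j0 by simp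
    ultimately show "z \<in> q ` {i\<in>{..<N}. p i \<in> T x k}" using i by blast
  qed
qed

lemma pT_img: "path x k \<Longrightarrow> p ` {i\<in>{..<N}. p i \<in> T x k} = T x k"
  using T_X[of x k] imp by auto

lemma pnT_img: "path x k \<Longrightarrow> p ` {i\<in>{..<N}. p i \<notin> T x k} = X - T x k"
  using imp by auto

lemma swap_conf:
  assumes "path x k"
  shows "conf N (sp x k) (sq x k) (X - {x} \<union> {(nx^^k) x}) (Y - {(nx^^k) x} \<union> {x})"
proof
  let ?T = "T x k" let ?e = "(nx^^k) x"
  let ?RT = "{i\<in>{..<N}. p i \<in> ?T}" let ?RN = "{i\<in>{..<N}. p i \<notin> ?T}"
  have TX: "?T \<subseteq> X" using T_X[OF assms] .
  have xT: "x \<in> ?T" using x_T[OF assms] .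
  have eX: "?e \<notin> X" "?e \<in> Y" using assms unfolding path_def by auto
  have xY: "x \<notin> Y" "x \<in> X" using assms unfolding path_def by auto
  have TY: "?T - {x} \<subseteq> Y" using TmY[OF assms] .
  have un: "{..<N} = ?RT \<union> ?RN" by auto
  have spimg: "sp x k ` {..<N} = X - {x} \<union> {?e}"
  proof -
    have "sp x k ` {..<N} = sp x k ` ?RT \<union> sp x k ` ?RN" by (subst un) (rule image_Un)
    also have "sp x k ` ?RT = q ` ?RT" unfolding sp_def by (intro image_cong) auto
    also have "sp x k ` ?RN = p ` ?RN" unfolding sp_def by (intro image_cong) auto
    finally show ?thesis using qT_img[OF assms] pnT_img[OF assms] TX xT by auto
  qed
  have spinj: "inj_on (sp x k) {..<N}"
  proof (rule inj_onI)
    fix i i' assume ii: "i \<in> {..<N}" "i' \<in> {..<N}" "sp x k i = sp x k i'"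
    have mixed: "\<And>i i'. i < N \<Longrightarrow> i' < N \<Longrightarrow> p i \<in> ?T \<Longrightarrow> p i' \<notin> ?T \<Longrightarrow> q i \<noteq> p i'"
    proof
      fix i i' assume a: "i < N" "i' < N" "p i \<in> ?T" "p i' \<notin> ?T" "q i = p i'"
      obtain j where j: "j < k" "q i = (nx^^Suc j) x" using T_q[OF assms a(1,3)] by blast
      show False
      proof (cases "Suc j = k")
        case True then show False using a j eX pX by auto
      next
        case False then have "q i \<in> ?T" using j unfolding T_def by (auto intro!: image_eqI[where x="Suc j"])
        then show False using a by simp
      qed
    qed
    show "i = i'"
    proof (cases "p i \<in> ?T"; cases "p i' \<in> ?T")
      assume "p i \<in> ?T" "p i' \<in> ?T" then show ?thesis using ii injq unfolding sp_def by (auto dest: inj_onD)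
    next
      assume "p i \<in> ?T" "p i' \<notin> ?T" then show ?thesis using ii mixed[of i i'] unfolding sp_def by auto
    next
      assume "p i \<notin> ?T" "p i' \<in> ?T" then show ?thesis using ii mixed[of i' i] unfolding sp_def by auto
    next
      assume "p i \<notin> ?T" "p i' \<notin> ?T" then show ?thesis using ii injp unfolding sp_def by (auto dest: inj_onD)
    qed
  qed
  show "bij_betw (sp x k) {..<N} (X - {x} \<union> {?e})" using spimg spinj by (simp add: bij_betw_def)
  have sqimg: "sq x k ` {..<N} = Y - {?e} \<union> {x}"
  proof -
    have "sq x k ` {..<N} = sq x k ` ?RT \<union> sq x k ` ?RN" by (subst un) (rule image_Un)
    also have "sq x k ` ?RT = p ` ?RT" unfolding sq_def by (intro image_cong) auto
    also have "sq x k ` ?RN = q ` ?RN" unfolding sq_def by (intro image_cong) auto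
    also have "q ` ?RN = q ` {..<N} - q ` ?RT"
    proof -
      have "?RN = {..<N} - ?RT" by auto
      then show ?thesis using inj_on_image_set_diff[OF injq, of "{..<N}" ?RT] by auto
    qed
    finally have "sq x k ` {..<N} = ?T \<union> (Y - ((?T - {x}) \<union> {?e}))"
      using qT_img[OF assms] pT_img[OF assms] imq by simp
    then show ?thesis using TY xT eX(1) TX xY by auto
  qed
  have sqinj: "inj_on (sq x k) {..<N}"
  proof (rule inj_onI)
    fix i i' assume ii: "i \<in> {..<N}" "i' \<in> {..<N}" "sq x k i = sq x k i'"
    have mixed: "\<And>i i'. i < N \<Longrightarrow> i' < N \<Longrightarrow> p i \<in> ?T \<Longrightarrow> p i' \<notin> ?T \<Longrightarrow> p i \<noteq> q i'"
    proof
      fix i i' assume a: "i < N" "i' < N" "p i \<in> ?T" "p i' \<notin> ?T" "p i = q i'"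
      obtain j where j: "j < k" "p i = (nx^^j) x" using a unfolding T_def by auto
      show False
      proof (cases j)
        case 0 then show False using a j xY qY by auto
      next
        case (Suc j0)
        have "(nx^^j0) x \<in> X" using assms j Suc unfolding path_def by auto
        then obtain i0 where i0: "i0 < N" "p i0 = (nx^^j0) x" using row_of by blast
        have "q i0 = p i" using nx_p[OF i0(1)] i0 j Suc by simp
        then have "i0 = i'" using a i0 injq by (auto dest: inj_onD)
        moreover have "p i0 \<in> ?T" using i0 j Suc unfolding T_def by auto
        ultimately show False using a by simp
      qed
    qed
    show "i = i'"
    proof (cases "p i \<in> ?T"; cases "p i' \<in> ?T")
      assume "p i \<in> ?T" "p i' \<in> ?T" then show ?thesis using ii injp unfolding sq_def by (auto dest: inj_onD)
    next
      assume "p i \<in> ?T" "p i' \<notin> ?T" then show ?thesis using ii mixed[of i i'] unfolding sq_def by auto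
    next
      assume "p i \<notin> ?T" "p i' \<in> ?T" then show ?thesis using ii mixed[of i' i] unfolding sq_def by auto
    next
      assume "p i \<notin> ?T" "p i' \<notin> ?T" then show ?thesis using ii injq unfolding sq_def by (auto dest: inj_onD)
    qed
  qed
  show "bij_betw (sq x k) {..<N} (Y - {?e} \<union> {x})" using sqimg sqinj by (simp add: bij_betw_def)
qed

lemma val_swap: "val G N (sp x k) (sq x k) = val G N p q"
  unfolding val_def sp_def sq_def by (intro sum.cong) auto

lemma swap_ex:
  assumes "path x k"
  shows "\<exists>p' q'. conf N p' q' (X - {x} \<union> {(nx^^k) x}) (Y - {(nx^^k) x} \<union> {x}) \<and> val G N p' q' = val G N p q"
  using swap_conf[OF assms] val_swap by blast

lemma swap_nx_out:
  assumes "path x k" "c \<in> X - T x k"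
  shows "conf.nx N (sp x k) (sq x k) c = nx c"
proof -
  interpret c': conf N "sp x k" "sq x k" "X - {x} \<union> {(nx^^k) x}" "Y - {(nx^^k) x} \<union> {x}"
    by (rule swap_conf[OF assms(1)])
  obtain i where i: "i < N" "p i = c" using row_of assms(2) by blast
  have "sp x k i = c" "sq x k i = q i" using i assms(2) unfolding sp_def sq_def by auto
  then show ?thesis using c'.nx_p[OF i(1)] nx_p[OF i(1)] i by simp
qed

lemma swap_nx_in:
  assumes "path x k" "j < k"
  shows "conf.nx N (sp x k) (sq x k) ((nx^^Suc j) x) = (nx^^j) x"
proof -
  interpret c': conf N "sp x k" "sq x k" "X - {x} \<union> {(nx^^k) x}" "Y - {(nx^^k) x} \<union> {x}"
    by (rule swap_conf[OF assms(1)])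
  have "(nx^^j) x \<in> X" using assms unfolding path_def by auto
  then obtain i where i: "i < N" "p i = (nx^^j) x" using row_of by blast
  have T: "p i \<in> T x k" using i assms unfolding T_def by auto
  have "sp x k i = (nx^^Suc j) x" "sq x k i = (nx^^j) x"
    using i T nx_p[OF i(1)] unfolding sp_def sq_def by auto
  then show ?thesis using c'.nx_p[OF i(1)] by simp
qed

lemma swap_path_rev:
  assumes "path x k"
  shows "conf.path N (sp x k) (sq x k) (X - {x} \<union> {(nx^^k) x}) (Y - {(nx^^k) x} \<union> {x}) ((nx^^k) x) k
     \<and> (\<forall>j\<le>k. (conf.nx N (sp x k) (sq x k) ^^ j) ((nx^^k) x) = (nx^^(k-j)) x)"
proof -
  interpret c': conf N "sp x k" "sq x k" "X - {x} \<union> {(nx^^k) x}" "Y - {(nx^^k) x} \<union> {x}"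
    by (rule swap_conf[OF assms(1)])
  have it: "\<forall>j\<le>k. (c'.nx ^^ j) ((nx^^k) x) = (nx^^(k-j)) x"
  proof (intro allI impI)
    fix j show "j \<le> k \<Longrightarrow> (c'.nx ^^ j) ((nx^^k) x) = (nx^^(k-j)) x"
    proof (induction j)
      case 0 then show ?case by simp
    next
      case (Suc j)
      then have e: "k - j = Suc (k - Suc j)" by simp
      have "(c'.nx ^^ Suc j) ((nx^^k) x) = c'.nx ((nx^^(k-j)) x)" using Suc by simp
      also have "\<dots> = c'.nx ((nx^^Suc (k - Suc j)) x)" using e by simp
      also have "\<dots> = (nx^^(k - Suc j)) x" using swap_nx_in[OF assms, of "k - Suc j"] Suc by simp
      finally show ?case .
    qed
  qed
  have p: "c'.path ((nx^^k) x) k"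
    unfolding c'.path_def
  proof (intro conjI allI impI)
    show "(nx^^k) x \<in> X - {x} \<union> {(nx^^k) x} - (Y - {(nx^^k) x} \<union> {x})"
      using assms unfolding path_def by auto
    show "(c'.nx ^^ k) ((nx^^k) x) \<in> Y - {(nx^^k) x} \<union> {x} - (X - {x} \<union> {(nx^^k) x})"
      using it assms unfolding path_def by auto
    fix j assume "j < k"
    then have "(c'.nx ^^ j) ((nx^^k) x) = (nx^^(k-j)) x" using it by simp
    moreover have "(nx^^(k-j)) x \<in> X \<or> k - j = k" using assms \<open>j<k\<close> unfolding path_def by (cases "k-j<k") auto
    moreover have "(nx^^(k-j)) x \<noteq> x"
    proof
      assume "(nx^^(k-j)) x = x"
      moreover have "(nx^^(k-j)) x \<in> Y" using iter_Y[of "k-j" x] assms \<open>j<k\<close> unfolding path_def by auto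
      ultimately show False using assms unfolding path_def by auto
    qed
    ultimately show "(c'.nx ^^ j) ((nx^^k) x) \<in> X - {x} \<union> {(nx^^k) x}" by auto
  qed
  show ?thesis using p it by blast
qed

lemma swap_path_other:
  assumes "path x k" "path x' k'" "x \<noteq> x'"
  shows "conf.path N (sp x k) (sq x k) (X - {x} \<union> {(nx^^k) x}) (Y - {(nx^^k) x} \<union> {x}) x' k'
     \<and> (\<forall>j\<le>k'. (conf.nx N (sp x k) (sq x k) ^^ j) x' = (nx^^j) x')"
proof -
  interpret c': conf N "sp x k" "sq x k" "X - {x} \<union> {(nx^^k) x}" "Y - {(nx^^k) x} \<union> {x}"
    by (rule swap_conf[OF assms(1)])
  have nT: "\<And>j. j \<le> k' \<Longrightarrow> (nx^^j) x' \<notin> T x k"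
  proof
    fix j assume "j \<le> k'" "(nx^^j) x' \<in> T x k"
    then obtain i where "i < k" "(nx^^j) x' = (nx^^i) x" unfolding T_def by auto
    then show False using path_disj[OF assms(1,2,3), of i j] \<open>j \<le> k'\<close> by auto
  qed
  have it: "\<forall>j\<le>k'. (c'.nx ^^ j) x' = (nx^^j) x'"
  proof (intro allI impI)
    fix j show "j \<le> k' \<Longrightarrow> (c'.nx ^^ j) x' = (nx^^j) x'"
    proof (induction j)
      case 0 then show ?case by simp
    next
      case (Suc j)
      have "(nx^^j) x' \<in> X" using assms(2) Suc.prems unfolding path_def by auto
      then have "c'.nx ((nx^^j) x') = nx ((nx^^j) x')" using swap_nx_out[OF assms(1)] nT[of j] Suc.prems by simp
      then show ?case using Suc by simp
    qed
  qed
  have ne1: "(nx^^j) x' \<noteq> x" if "j \<le> k'" for j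
    using path_disj[OF assms(1,2,3), of 0 j] that by auto
  have ne2: "(nx^^j) x' \<noteq> (nx^^k) x" if "j \<le> k'" for j
    using path_disj[OF assms(1,2,3), of k j] that by auto
  note ne = ne1 ne2
  have p: "c'.path x' k'"
    unfolding c'.path_def
  proof (intro conjI allI impI)
    show "x' \<in> X - {x} \<union> {(nx^^k) x} - (Y - {(nx^^k) x} \<union> {x})"
      using assms ne[of 0] unfolding path_def by auto
    show "(c'.nx ^^ k') x' \<in> Y - {(nx^^k) x} \<union> {x} - (X - {x} \<union> {(nx^^k) x})"
      using it assms ne[of k'] unfolding path_def by auto
    fix j assume "j < k'"
    then show "(c'.nx ^^ j) x' \<in> X - {x} \<union> {(nx^^k) x}" using it assms(2) ne[of j] unfolding path_def by auto
  qed
  show ?thesis using p it by blast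
qed

lemma reconn0:
  assumes P1: "path x1 k" and P2: "path x2 l" and ne: "x1 \<noteq> x2" and st: "s < k" "t < l"
    and c2: "conf N p2 q2 X Y"
    and eq: "\<And>c. c \<in> X \<Longrightarrow> c \<noteq> (nx^^s) x1 \<Longrightarrow> c \<noteq> (nx^^t) x2 \<Longrightarrow> conf.nx N p2 q2 c = nx c"
    and e1: "conf.nx N p2 q2 ((nx^^s) x1) = (nx^^Suc t) x2"
    and e2: "conf.nx N p2 q2 ((nx^^t) x2) = (nx^^Suc s) x1"
  shows "conf.path N p2 q2 X Y x2 (t + (k - s)) \<and> (conf.nx N p2 q2 ^^ (t + (k - s))) x2 = (nx^^k) x1"
proof -
  interpret c2: conf N p2 q2 X Y by (rule c2)
  have A: "(c2.nx ^^ j) x2 = (nx^^j) x2" if "j \<le> t" for j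
    using that
  proof (induction j)
    case 0 then show ?case by simp
  next
    case (Suc j)
    have "(nx^^j) x2 \<in> X" using P2 Suc.prems st unfolding path_def by auto
    moreover have "(nx^^j) x2 \<noteq> (nx^^t) x2" using path_dist[OF P2, of j t] Suc.prems st by auto
    moreover have "(nx^^j) x2 \<noteq> (nx^^s) x1" using path_disj[OF P1 P2 ne, of s j] Suc.prems st by auto
    ultimately show ?case using Suc eq by simp
  qed
  have B: "(c2.nx ^^ Suc t) x2 = (nx^^Suc s) x1" using A[of t] e2 by simp
  have C: "(c2.nx ^^ (Suc t + m)) x2 = (nx^^(Suc s + m)) x1" if "Suc s + m \<le> k" for m
    using that
  proof (induction m)
    case 0 then show ?case using B by simp
  next
    case (Suc m)
    have lt: "Suc s + m < k" using Suc.prems by simp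
    have "(nx^^(Suc s + m)) x1 \<in> X" using P1 lt unfolding path_def by auto
    moreover have "(nx^^(Suc s + m)) x1 \<noteq> (nx^^s) x1" using path_dist[OF P1, of s "Suc s + m"] lt by auto
    moreover have "(nx^^(Suc s + m)) x1 \<noteq> (nx^^t) x2" using path_disj[OF P1 P2 ne, of "Suc s + m" t] lt st by auto
    ultimately have "c2.nx ((nx^^(Suc s + m)) x1) = nx ((nx^^(Suc s + m)) x1)" using eq by simp
    then show ?case using Suc lt by simp
  qed
  have tk: "t + (k - s) = Suc t + (k - Suc s)" using st by simp
  have fin: "(c2.nx ^^ (t + (k - s))) x2 = (nx^^k) x1"
    using C[of "k - Suc s"] st tk by simp
  have "c2.path x2 (t + (k - s))"
    unfolding c2.path_def
  proof (intro conjI allI impI)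
    show "x2 \<in> X - Y" using P2 unfolding path_def by auto
    show "(c2.nx ^^ (t + (k - s))) x2 \<in> Y - X" using fin P1 unfolding path_def by auto
    fix j assume j: "j < t + (k - s)"
    show "(c2.nx ^^ j) x2 \<in> X"
    proof (cases "j \<le> t")
      case True then show ?thesis using A[OF True] P2 st unfolding path_def by auto
    next
      case False
      define m where "m = j - Suc t"
      have m: "j = Suc t + m" using False unfolding m_def by simp
      then have "Suc s + m < k" using j st by simp
      then show ?thesis using C[of m] m P1 unfolding path_def by auto
    qed
  qed
  then show ?thesis using fin by blast
qed

lemma sum_two:
  fixes f f' :: "nat \<Rightarrow> real"
  assumes "i < N" "j < N" "i \<noteq> j" "\<And>z. z \<noteq> i \<Longrightarrow> z \<noteq> j \<Longrightarrow> f' z = f z"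
  shows "(\<Sum>z<N. f' z) = (\<Sum>z<N. f z) + (f' i - f i) + (f' j - f j)"
proof -
  have "(\<Sum>z<N. f' z - f z) = (\<Sum>z<N. (if z = i then f' i - f i else 0) + (if z = j then f' j - f j else 0))"
    using assms by (intro sum.cong) auto
  also have "\<dots> = (\<Sum>z<N. (if z = i then f' i - f i else 0)) + (\<Sum>z<N. (if z = j then f' j - f j else 0))"
    by (rule sum.distrib)
  also have "\<dots> = (f' i - f i) + (f' j - f j)" using assms(1,2) by simp
  finally have "(\<Sum>z<N. f' z) - (\<Sum>z<N. f z) = (f' i - f i) + (f' j - f j)" by (simp add: sum_subtractf)
  then show ?thesis by simp
qed

lemma bij_sw:
  assumes "bij_betw h {..<N} Z" "i < N" "j < N"
  shows "bij_betw (\<lambda>z. if z = i then h j else if z = j then h i else h z) {..<N} Z"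
proof -
  define sw where "sw = (\<lambda>z::nat. if z = i then j else if z = j then i else z)"
  have "bij_betw sw {..<N} {..<N}"
    by (rule bij_betw_byWitness[where f'=sw]) (use assms in \<open>auto simp: sw_def\<close>)
  from bij_betw_trans[OF this assms(1)] have "bij_betw (h \<circ> sw) {..<N} Z" .
  moreover have "h \<circ> sw = (\<lambda>z. if z = i then h j else if z = j then h i else h z)"
    by (rule ext) (simp add: sw_def)
  ultimately show ?thesis by simp
qed

lemma reconn:
  assumes P1: "path x1 k" and P2: "path x2 l" and ne: "x1 \<noteq> x2" and st: "s < k" "t < l"
    and ij: "i < N" "j < N" "p i = (nx^^s) x1" "p j = (nx^^t) x2"
    and D: "G i (q j) - G i (q i) + G j (q i) - G j (q j) \<ge> 0 \<or> G i (p j) - G i (p i) + G j (p i) - G j (p j) \<ge> 0"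
  shows "\<exists>p' q'. conf N p' q' (X - {x2} \<union> {(nx^^k) x1}) (Y - {(nx^^k) x1} \<union> {x2}) \<and> val G N p q \<le> val G N p' q'"
proof -
  have pij: "p i \<noteq> p j" using path_disj[OF P1 P2 ne, of s t] ij st by auto
  then have inej: "i \<noteq> j" by auto
  have qi: "q i = (nx^^Suc s) x1" "q j = (nx^^Suc t) x2" using nx_p[OF ij(1)] nx_p[OF ij(2)] ij by auto
  have main: "\<exists>p' q'. conf N p' q' (X - {x2} \<union> {(nx^^k) x1}) (Y - {(nx^^k) x1} \<union> {x2}) \<and> val G N p2 q2 = val G N p' q'"
    if c2: "conf N p2 q2 X Y"
    and eq: "\<And>c. c \<in> X \<Longrightarrow> c \<noteq> (nx^^s) x1 \<Longrightarrow> c \<noteq> (nx^^t) x2 \<Longrightarrow> conf.nx N p2 q2 c = nx c"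
    and e1: "conf.nx N p2 q2 ((nx^^s) x1) = (nx^^Suc t) x2"
    and e2: "conf.nx N p2 q2 ((nx^^t) x2) = (nx^^Suc s) x1" for p2 q2
  proof -
    interpret c2: conf N p2 q2 X Y by (rule c2)
    from reconn0[OF P1 P2 ne st c2 eq e1 e2]
    have pp: "c2.path x2 (t + (k - s))" and ee: "(c2.nx ^^ (t + (k - s))) x2 = (nx^^k) x1" by auto
    from c2.swap_ex[OF pp, of G] ee show ?thesis by metis
  qed
  from D show ?thesis
  proof
    assume d: "G i (q j) - G i (q i) + G j (q i) - G j (q j) \<ge> 0"
    define q2 where "q2 = (\<lambda>z. if z = i then q j else if z = j then q i else q z)"
    have c2: "conf N p q2 X Y" unfolding q2_def by unfold_locales (use bp bij_sw[OF bq ij(1,2)] in auto)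
    interpret c2: conf N p q2 X Y by (rule c2)
    have v: "val G N p q2 \<ge> val G N p q"
      unfolding val_def using sum_two[OF ij(1,2) inej, of "\<lambda>z. G z (p z) + G z (q2 z)" "\<lambda>z. G z (p z) + G z (q z)"]
        d inej unfolding q2_def by auto
    have eq: "c2.nx c = nx c" if h: "c \<in> X" "c \<noteq> (nx^^s) x1" "c \<noteq> (nx^^t) x2" for c
    proof -
      obtain z where z: "z < N" "p z = c" using row_of h(1) by blast
      then have "z \<noteq> i" "z \<noteq> j" using h ij by auto
      then show ?thesis using c2.nx_p[OF z(1)] nx_p[OF z(1)] z unfolding q2_def by auto
    qed
    have e1: "c2.nx ((nx^^s) x1) = (nx^^Suc t) x2" using c2.nx_p[OF ij(1)] ij qi unfolding q2_def by auto
    have e2: "c2.nx ((nx^^t) x2) = (nx^^Suc s) x1" using c2.nx_p[OF ij(2)] ij qi inej unfolding q2_def by auto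
    show ?thesis using main[OF c2 eq e1 e2] v by fastforce
  next
    assume d: "G i (p j) - G i (p i) + G j (p i) - G j (p j) \<ge> 0"
    define p2 where "p2 = (\<lambda>z. if z = i then p j else if z = j then p i else p z)"
    have c2: "conf N p2 q X Y" unfolding p2_def by unfold_locales (use bq bij_sw[OF bp ij(1,2)] in auto)
    interpret c2: conf N p2 q X Y by (rule c2)
    have v: "val G N p2 q \<ge> val G N p q"
      unfolding val_def using sum_two[OF ij(1,2) inej, of "\<lambda>z. G z (p2 z) + G z (q z)" "\<lambda>z. G z (p z) + G z (q z)"]
        d inej unfolding p2_def by auto
    have eq: "c2.nx c = nx c" if h: "c \<in> X" "c \<noteq> (nx^^s) x1" "c \<noteq> (nx^^t) x2" for c
    proof -
      obtain z where z: "z < N" "p z = c" using row_of h(1) by blast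
      then have "z \<noteq> i" "z \<noteq> j" using h ij by auto
      then have "p2 z = c" using z unfolding p2_def by auto
      then show ?thesis using c2.nx_p[OF z(1)] nx_p[OF z(1)] z by auto
    qed
    have "p2 j = (nx^^s) x1" using ij inej unfolding p2_def by auto
    then have e1: "c2.nx ((nx^^s) x1) = (nx^^Suc t) x2" using c2.nx_p[OF ij(2)] qi by auto
    have "p2 i = (nx^^t) x2" using ij unfolding p2_def by auto
    then have e2: "c2.nx ((nx^^t) x2) = (nx^^Suc s) x1" using c2.nx_p[OF ij(1)] qi by auto
    show ?thesis using main[OF c2 eq e1 e2] v by fastforce
  qed
qed

lemma cross:
  fixes yy rr :: "nat \<Rightarrow> real"
  defines "G \<equiv> \<lambda>i c. \<bar>yy i + real_of_int c * rr i\<bar>"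
  assumes P1: "path x1 k" and P2: "path x2 l" and lt: "x1 < x2" "x2 < (nx^^k) x1"
    and mx: "\<forall>z\<in>X \<union> Y. z \<le> (nx^^l) x2"
  shows "\<exists>p' q'. conf N p' q' (X - {x2} \<union> {(nx^^k) x1}) (Y - {(nx^^k) x1} \<union> {x2}) \<and> val G N p q \<le> val G N p' q'"
proof -
  have ne: "x1 \<noteq> x2" using lt by simp
  have nb: "\<forall>j\<le>k. (nx^^j) x1 \<noteq> x2" using path_disj[OF P1 P2 ne, of _ 0] by auto
  obtain s where s: "s < k" "(nx^^s) x1 < x2" "x2 < (nx^^Suc s) x1"
    using ivt[of "\<lambda>j. (nx^^j) x1" x2 k] lt nb by auto
  define u where "u = (nx^^s) x1"
  define v where "v = (nx^^Suc s) x1"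
  have vXY: "v \<in> X \<union> Y"
  proof (cases "Suc s < k")
    case True then show ?thesis using P1 unfolding path_def v_def by auto
  next
    case False then have "Suc s = k" using s by simp
    then show ?thesis using P1 unfolding path_def v_def by auto
  qed
  have "v \<noteq> (nx^^l) x2" using path_disj[OF P1 P2 ne, of "Suc s" l] s unfolding v_def by auto
  then have ve: "v < (nx^^l) x2" using mx vXY by force
  obtain t where t: "t < l" "u < (nx^^t) x2 \<and> (nx^^t) x2 < v" "\<not> (u < (nx^^Suc t) x2 \<and> (nx^^Suc t) x2 < v)"
    using exitl[of "\<lambda>j. u < (nx^^j) x2 \<and> (nx^^j) x2 < v" l] s ve unfolding u_def v_def by auto
  define w where "w = (nx^^t) x2"
  define w' where "w' = (nx^^Suc t) x2"
  have "w' \<noteq> u" using path_disj[OF P1 P2 ne, of s "Suc t"] s t unfolding u_def w'_def by auto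
  moreover have "w' \<noteq> v" using path_disj[OF P1 P2 ne, of "Suc s" "Suc t"] s t unfolding v_def w'_def by auto
  ultimately have w'o: "w' < u \<or> v < w'" using t(3) unfolding w'_def by auto
  have uX: "u \<in> X" using P1 s unfolding path_def u_def by auto
  have wX: "w \<in> X" using P2 t unfolding path_def w_def by auto
  obtain i where i: "i < N" "p i = u" using row_of uX by blast
  obtain j where j: "j < N" "p j = w" using row_of wX by blast
  have qi: "q i = v" using nx_p[OF i(1)] i unfolding u_def v_def by simp
  have qj: "q j = w'" using nx_p[OF j(1)] j unfolding w_def w'_def by simp
  define \<phi> where "\<phi> = (\<lambda>z. G i z - G j z)"
  have V: "\<phi> w \<ge> \<phi> u \<or> \<phi> w \<ge> \<phi> v \<or> \<phi> w' \<ge> \<phi> u \<or> \<phi> w' \<ge> \<phi> v"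
  proof -
    have r: "real_of_int u < real_of_int w" "real_of_int w < real_of_int v"
      "real_of_int w' < real_of_int u \<or> real_of_int v < real_of_int w'"
      using t(2) w'o unfolding w_def by auto
    from vlem[OF r, of "yy i" "rr i" "yy j" "rr j"] show ?thesis
      unfolding \<phi>_def G_def by (simp add: mult.commute)
  qed
  have V': "(\<phi> w \<ge> \<phi> u \<or> \<phi> w' \<ge> \<phi> v) \<or> (\<phi> w \<ge> \<phi> v \<or> \<phi> w' \<ge> \<phi> u)" using V by blast
  then show ?thesis
  proof
    assume h: "\<phi> w \<ge> \<phi> u \<or> \<phi> w' \<ge> \<phi> v"
    have D: "G i (q j) - G i (q i) + G j (q i) - G j (q j) \<ge> 0 \<or> G i (p j) - G i (p i) + G j (p i) - G j (p j) \<ge> 0"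
      using h i j qi qj unfolding \<phi>_def by auto
    show ?thesis
      by (rule reconn[OF P1 P2 ne s(1) t(1) i(1) j(1) _ _ D]) (use i j in \<open>auto simp: u_def w_def\<close>)
  next
    assume h: "\<phi> w \<ge> \<phi> v \<or> \<phi> w' \<ge> \<phi> u"
    let ?X' = "X - {x2} \<union> {(nx^^l) x2}" let ?Y' = "Y - {(nx^^l) x2} \<union> {x2}"
    interpret c': conf N "sp x2 l" "sq x2 l" ?X' ?Y' by (rule swap_conf[OF P2])
    have R: "c'.path ((nx^^l) x2) l" "\<forall>j\<le>l. (c'.nx ^^ j) ((nx^^l) x2) = (nx^^(l-j)) x2"
      using swap_path_rev[OF P2] by auto
    have O: "c'.path x1 k" "\<forall>j\<le>k. (c'.nx ^^ j) x1 = (nx^^j) x1"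
      using swap_path_other[OF P2 P1 ne[symmetric]] by auto
    have uT: "u \<notin> T x2 l"
    proof
      assume "u \<in> T x2 l"
      then obtain j0 where "j0 < l" "u = (nx^^j0) x2" unfolding T_def by auto
      then show False using path_disj[OF P1 P2 ne, of s j0] s unfolding u_def by auto
    qed
    have wT: "w \<in> T x2 l" using t unfolding T_def w_def by auto
    have spi: "sp x2 l i = u" "sq x2 l i = v" using i qi uT unfolding sp_def sq_def by auto
    have spj: "sp x2 l j = w'" "sq x2 l j = w" using j qj wT unfolding sp_def sq_def by auto
    have ne2: "x1 \<noteq> (nx^^l) x2" using P1 P2 unfolding path_def by auto
    have it1: "(c'.nx ^^ s) x1 = u" using O(2) s unfolding u_def by simp
    have it2: "(c'.nx ^^ (l - Suc t)) ((nx^^l) x2) = w'" using R(2) t unfolding w'_def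
      by (simp add: Suc_diff_Suc)
    have D: "G i (sq x2 l j) - G i (sq x2 l i) + G j (sq x2 l i) - G j (sq x2 l j) \<ge> 0 \<or>
             G i (sp x2 l j) - G i (sp x2 l i) + G j (sp x2 l i) - G j (sp x2 l j) \<ge> 0"
      using h spi spj unfolding \<phi>_def by auto
    have "\<exists>p' q'. conf N p' q' (?X' - {(nx^^l) x2} \<union> {(c'.nx^^k) x1}) (?Y' - {(c'.nx^^k) x1} \<union> {(nx^^l) x2})
           \<and> val G N (sp x2 l) (sq x2 l) \<le> val G N p' q'"
      by (rule c'.reconn[OF O(1) R(1) ne2 s(1), of "l - Suc t" i j]) (use t i j spi spj it1 it2 D in auto)
    moreover have "(c'.nx^^k) x1 = (nx^^k) x1" using O(2) by simp
    moreover have "?X' - {(nx^^l) x2} \<union> {(nx^^k) x1} = X - {x2} \<union> {(nx^^k) x1}"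
      using P2 unfolding path_def by auto
    moreover have "?Y' - {(nx^^k) x1} \<union> {(nx^^l) x2} = Y - {(nx^^k) x1} \<union> {x2}"
    proof -
      have "(nx^^k) x1 \<noteq> x2" "(nx^^k) x1 \<noteq> (nx^^l) x2" "(nx^^l) x2 \<in> Y"
        using P1 P2 path_disj[OF P1 P2 ne, of k l] unfolding path_def by auto
      then show ?thesis by auto
    qed
    moreover have "val G N (sp x2 l) (sq x2 l) = val G N p q" by (rule val_swap)
    ultimately show ?thesis by metis
  qed
qed

lemma flip: "conf N q p Y X" by unfold_locales (use bp bq in auto)

lemma goodR1:
  fixes yy rr :: "nat \<Rightarrow> real"
  assumes XY: "X - Y = {a, b}" "Y - X = {c, d}" and o: "a < b" "b < c" "c \<noteq> d"
    and mx: "\<forall>z\<in>X \<union> Y. z \<le> d"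
  shows "\<exists>p' q'. conf N p' q' (X - {b} \<union> {c}) (Y - {c} \<union> {b})
     \<and> val (\<lambda>i c. \<bar>yy i + real_of_int c * rr i\<bar>) N p q \<le> val (\<lambda>i c. \<bar>yy i + real_of_int c * rr i\<bar>) N p' q'"
proof -
  let ?G = "\<lambda>i c. \<bar>yy i + real_of_int c * rr i\<bar>"
  have "b \<in> X - Y" using XY by auto
  then obtain l where P2: "path b l" using path_ex by blast
  then have "(nx^^l) b = c \<or> (nx^^l) b = d" using XY unfolding path_def by auto
  then show ?thesis
  proof
    assume e: "(nx^^l) b = c"
    obtain p' q' where "conf N p' q' (X - {b} \<union> {(nx^^l) b}) (Y - {(nx^^l) b} \<union> {b})" "val ?G N p' q' = val ?G N p q"
      using swap_ex[OF P2, of ?G] by blast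
    then show ?thesis using e by (intro exI[of _ p'] exI[of _ q']) simp
  next
    assume e: "(nx^^l) b = d"
    have "a \<in> X - Y" using XY by auto
    then obtain k where P1: "path a k" using path_ex by blast
    then have e1: "(nx^^k) a \<in> {c, d}" using XY unfolding path_def by auto
    have "(nx^^k) a \<noteq> (nx^^l) b" using path_disj[OF P1 P2, of k l] o by auto
    then have e1c: "(nx^^k) a = c" using e1 e by auto
    have "\<forall>z\<in>X \<union> Y. z \<le> (nx^^l) b" using mx e by simp
    from cross[OF P1 P2 o(1) _ this, of yy rr] e1c o show ?thesis by simp
  qed
qed

lemma R2step:
  fixes yy rr :: "nat \<Rightarrow> real"
  assumes XY: "X - Y = {a, d}" "Y - X = {b, c}" and o: "a < b" "b < c" "c \<noteq> d" "a \<noteq> d" "b \<noteq> d"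
    and mx: "\<forall>z\<in>X \<union> Y. z \<le> d"
  shows "\<exists>p' q'. (conf N p' q' (X - {a} \<union> {b}) (Y - {b} \<union> {a}) \<or> conf N p' q' (X - {d} \<union> {c}) (Y - {c} \<union> {d}))
     \<and> val (\<lambda>i c. \<bar>yy i + real_of_int c * rr i\<bar>) N p q \<le> val (\<lambda>i c. \<bar>yy i + real_of_int c * rr i\<bar>) N p' q'"
proof -
  let ?G = "\<lambda>i c. \<bar>yy i + real_of_int c * rr i\<bar>"
  have "a \<in> X - Y" using XY by auto
  then obtain k where P1: "path a k" using path_ex by blast
  then have "(nx^^k) a = b \<or> (nx^^k) a = c" using XY unfolding path_def by auto
  then show ?thesis
  proof
    assume e: "(nx^^k) a = b"
    obtain p' q' where "conf N p' q' (X - {a} \<union> {(nx^^k) a}) (Y - {(nx^^k) a} \<union> {a})" "val ?G N p' q' = val ?G N p q"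
      using swap_ex[OF P1, of ?G] by blast
    then show ?thesis using e by (intro exI[of _ p'] exI[of _ q']) simp
  next
    assume e: "(nx^^k) a = c"
    have "d \<in> X - Y" using XY by auto
    then obtain l where P2: "path d l" using path_ex by blast
    then have e2: "(nx^^l) d \<in> {b, c}" using XY unfolding path_def by auto
    have "(nx^^k) a \<noteq> (nx^^l) d" using path_disj[OF P1 P2, of k l] o by auto
    then have e2b: "(nx^^l) d = b" using e2 e by auto
    obtain p2 q2 where c2: "conf N p2 q2 (X - {d} \<union> {(nx^^l) d}) (Y - {(nx^^l) d} \<union> {d})" and v2: "val ?G N p2 q2 = val ?G N p q"
      using swap_ex[OF P2, of ?G] by blast
    have c2: "conf N p2 q2 (X - {d} \<union> {b}) (Y - {b} \<union> {d})" using c2 e2b by simp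
    interpret c2: conf N p2 q2 "X - {d} \<union> {b}" "Y - {b} \<union> {d}" by (rule c2)
    have bY: "b \<in> Y" "d \<in> X" "b \<notin> X" "d \<notin> Y" "c \<notin> X" "c \<in> Y" using XY by auto
    have XY2: "(X - {d} \<union> {b}) - (Y - {b} \<union> {d}) = {a, b}" "(Y - {b} \<union> {d}) - (X - {d} \<union> {b}) = {c, d}"
      using XY o bY by auto
    have mx2: "\<forall>z\<in>(X - {d} \<union> {b}) \<union> (Y - {b} \<union> {d}). z \<le> d" using mx bY by auto
    from c2.goodR1[OF XY2 o(1,2,3) mx2, of yy rr] obtain p' q' where
      "conf N p' q' (X - {d} \<union> {b} - {b} \<union> {c}) (Y - {b} \<union> {d} - {c} \<union> {b})" "val ?G N p2 q2 \<le> val ?G N p' q'"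
      by blast
    moreover have "X - {d} \<union> {b} - {b} \<union> {c} = X - {d} \<union> {c}" using bY by auto
    moreover have "Y - {b} \<union> {d} - {c} \<union> {b} = Y - {c} \<union> {d}" using bY o by auto
    ultimately show ?thesis using v2 by (intro exI[of _ p'] exI[of _ q']) simp
  qed
qed

end


lemma val_split: "val (\<lambda>i c. \<bar>y i + real_of_int c * r i\<bar>) N p q = (\<Sum>i<N. xvec y r (p i) i) + (\<Sum>i<N. xvec y r (q i) i)"
  by (simp add: val_def xvec_def sum.distrib)

lemma val_comm: "val G N p q = val G N q p"
  unfolding val_def by (simp add: add.commute)

lemma F_le:
  assumes "finite X" "card X = N" "finite Y" "card Y = N" "finite X'" "card X' = N" "finite Y'" "card Y' = N"
    and H: "\<And>p q. conf N p q X Y \<Longrightarrow> \<exists>p' q'. conf N p' q' X' Y' \<and>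
        val (\<lambda>i c. \<bar>y i + real_of_int c * r i\<bar>) N p q \<le> val (\<lambda>i c. \<bar>y i + real_of_int c * r i\<bar>) N p' q'"
  shows "Uset N y r X + Uset N y r Y \<le> Uset N y r X' + Uset N y r Y'"
proof -
  obtain f where f: "bij_betw f {..<N} X" "Uset N y r X = (\<Sum>i<N. xvec y r (f i) i)" using Uset_opt[OF assms(1,2)] by blast
  obtain g where g: "bij_betw g {..<N} Y" "Uset N y r Y = (\<Sum>i<N. xvec y r (g i) i)" using Uset_opt[OF assms(3,4)] by blast
  have "conf N f g X Y" by unfold_locales (use f g in auto)
  from H[OF this] obtain p' q' where pq: "conf N p' q' X' Y'"
    "val (\<lambda>i c. \<bar>y i + real_of_int c * r i\<bar>) N f g \<le> val (\<lambda>i c. \<bar>y i + real_of_int c * r i\<bar>) N p' q'" by blast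
  interpret c': conf N p' q' X' Y' by (rule pq(1))
  have "(\<Sum>i<N. xvec y r (p' i) i) \<le> Uset N y r X'" by (rule Uset_ge[OF assms(5,6) c'.bp])
  moreover have "(\<Sum>i<N. xvec y r (q' i) i) \<le> Uset N y r Y'" by (rule Uset_ge[OF assms(7,8) c'.bq])
  ultimately show ?thesis using pq(2) f(2) g(2) unfolding val_split by linarith
qed

theorem theorem1:
  fixes N :: nat and y r :: "nat \<Rightarrow> real" and k1 k2 k3 :: int
  assumes "N \<ge> 2"
    and "1 \<le> k1" and "k1 < k2" and "k2 < k3" and "k3 \<le> int N + 1"
  shows "Uset N y r ({1..int N + 1} - {k2}) + Uset N y r ({1..int N + 2} - {k1, k3})
       = max (Uset N y r ({1..int N + 1} - {k3}) + Uset N y r ({1..int N + 2} - {k1, k2}))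
             (Uset N y r ({1..int N + 1} - {k1}) + Uset N y r ({1..int N + 2} - {k2, k3}))"
proof -
  define A where "A = {1..int N + 1}"
  define B where "B = {1..int N + 2}"
  define m where "m = int N + 2"
  let ?G = "\<lambda>i c. \<bar>y i + real_of_int c * r i\<bar>"
  have BA: "B = insert m A" "m \<notin> A" unfolding A_def B_def m_def by auto
  have kA: "k1 \<in> A" "k2 \<in> A" "k3 \<in> A" using assms unfolding A_def by auto
  have finA: "finite A" "finite B" unfolding A_def B_def by auto
  have cA: "card A = N + 1" unfolding A_def by simp
  have cB: "card B = N + 2" unfolding B_def by simp
  have c1: "card (A - {k}) = N" if "k \<in> A" for k using that cA finA by simp
  have c2: "card (B - {k, k'}) = N" if "k \<in> B" "k' \<in> B" "k \<noteq> k'" for k k'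
  proof -
    have "card (B - {k, k'}) = card B - card {k, k'}" using that finA by (intro card_Diff_subset) auto
    then show ?thesis using that cB by simp
  qed
  have kB: "k1 \<in> B" "k2 \<in> B" "k3 \<in> B" using kA BA by auto
  have mx: "\<forall>z\<in>B. z \<le> m" unfolding B_def m_def by auto
  have dist: "k1 \<noteq> k2" "k1 \<noteq> k3" "k2 \<noteq> k3" "k1 \<noteq> m" "k2 \<noteq> m" "k3 \<noteq> m" using assms BA kA by auto
  define XL where "XL = A - {k2}"
  define YL where "YL = B - {k1, k3}"
  define X1 where "X1 = A - {k3}"
  define Y1 where "Y1 = B - {k1, k2}"
  define X2 where "X2 = A - {k1}"
  define Y2 where "Y2 = B - {k2, k3}"
  have fc: "finite XL" "card XL = N" "finite YL" "card YL = N" "finite X1" "card X1 = N" "finite Y1" "card Y1 = N"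
    "finite X2" "card X2 = N" "finite Y2" "card Y2 = N"
    unfolding XL_def YL_def X1_def Y1_def X2_def Y2_def using finA c1 c2 kA kB dist by auto
  have step1: "Uset N y r XL + Uset N y r YL \<le> max (Uset N y r X1 + Uset N y r Y1) (Uset N y r X2 + Uset N y r Y2)"
  proof -
    obtain f where f: "bij_betw f {..<N} XL" "Uset N y r XL = (\<Sum>i<N. xvec y r (f i) i)" using Uset_opt fc by blast
    obtain g where g: "bij_betw g {..<N} YL" "Uset N y r YL = (\<Sum>i<N. xvec y r (g i) i)" using Uset_opt fc by blast
    interpret c: conf N f g XL YL by unfold_locales (use f g in auto)
    have v: "val ?G N f g = Uset N y r XL + Uset N y r YL" using f g val_split by simp
    have "k1 \<in> XL - YL" unfolding XL_def YL_def using kA dist by auto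
    then obtain k where P: "c.path k1 k" using c.path_ex by blast
    have d: "YL - XL = {k2, m}" unfolding XL_def YL_def using BA kA dist by auto
    then have e: "(c.nx^^k) k1 = k2 \<or> (c.nx^^k) k1 = m" using P unfolding c.path_def by auto
    obtain p' q' where pq: "conf N p' q' (XL - {k1} \<union> {(c.nx^^k) k1}) (YL - {(c.nx^^k) k1} \<union> {k1})"
      "val ?G N p' q' = val ?G N f g" using c.swap_ex[OF P, of ?G] by blast
    from e show ?thesis
    proof
      assume e: "(c.nx^^k) k1 = k2"
      have s: "XL - {k1} \<union> {k2} = X2" "YL - {k2} \<union> {k1} = Y2"
        unfolding XL_def YL_def X2_def Y2_def using BA kA dist by auto
      interpret c': conf N p' q' X2 Y2 using pq(1) e s by simp
      have "val ?G N p' q' \<le> Uset N y r X2 + Uset N y r Y2"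
        unfolding val_split using Uset_ge[where y=y and r=r, OF fc(9,10) c'.bp] Uset_ge[where y=y and r=r, OF fc(11,12) c'.bq] by linarith
      then show ?thesis using pq(2) v by linarith
    next
      assume e: "(c.nx^^k) k1 = m"
      have s: "XL - {k1} \<union> {m} = Y1" "YL - {m} \<union> {k1} = X1"
        unfolding XL_def YL_def X1_def Y1_def using BA kA dist by auto
      interpret c': conf N p' q' Y1 X1 using pq(1) e s by simp
      have "val ?G N p' q' \<le> Uset N y r X1 + Uset N y r Y1"
        unfolding val_split using Uset_ge[where y=y and r=r, OF fc(5,6) c'.bq] Uset_ge[where y=y and r=r, OF fc(7,8) c'.bp] by linarith
      then show ?thesis using pq(2) v by linarith
    qed
  qed
  have step2: "Uset N y r X1 + Uset N y r Y1 \<le> Uset N y r XL + Uset N y r YL"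
  proof (rule F_le[OF fc(5-8) fc(1-4)])
    fix p q assume "conf N p q X1 Y1"
    then interpret c: conf N p q X1 Y1 .
    have XY: "X1 - Y1 = {k1, k2}" "Y1 - X1 = {k3, m}" unfolding X1_def Y1_def using BA kA dist by auto
    have mx1: "\<forall>z\<in>X1 \<union> Y1. z \<le> m" using mx BA unfolding X1_def Y1_def by auto
    have s: "X1 - {k2} \<union> {k3} = XL" "Y1 - {k3} \<union> {k2} = YL"
      unfolding XL_def YL_def X1_def Y1_def using BA kA dist by auto
    show "\<exists>p' q'. conf N p' q' XL YL \<and> val ?G N p q \<le> val ?G N p' q'"
      using c.goodR1[OF XY assms(3,4) dist(6) mx1, of y r] s by simp
  qed
  have step3: "Uset N y r X2 + Uset N y r Y2 \<le> Uset N y r XL + Uset N y r YL"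
  proof (rule F_le[OF fc(9-12) fc(1-4)])
    fix p q assume "conf N p q X2 Y2"
    then interpret c0: conf N p q X2 Y2 .
    interpret c: conf N q p Y2 X2 by (rule c0.flip)
    have XY: "Y2 - X2 = {k1, m}" "X2 - Y2 = {k2, k3}" unfolding X2_def Y2_def using BA kA dist by auto
    have mx2: "\<forall>z\<in>Y2 \<union> X2. z \<le> m" using mx BA unfolding X2_def Y2_def by auto
    have s: "Y2 - {k1} \<union> {k2} = YL" "X2 - {k2} \<union> {k1} = XL" "Y2 - {m} \<union> {k3} = XL" "X2 - {k3} \<union> {m} = YL"
      unfolding XL_def YL_def X2_def Y2_def using BA kA dist by auto
    obtain p' q' where pq: "conf N p' q' YL XL \<or> conf N p' q' XL YL" "val ?G N q p \<le> val ?G N p' q'"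
      using c.R2step[OF XY assms(3,4) dist(6) dist(4) dist(5) mx2, of y r] s by auto
    from pq(1) show "\<exists>p' q'. conf N p' q' XL YL \<and> val ?G N p q \<le> val ?G N p' q'"
    proof
      assume "conf N p' q' YL XL"
      then have "conf N q' p' XL YL" by (rule conf.flip)
      then show ?thesis using pq(2) val_comm[of ?G N p q] val_comm[of ?G N p' q'] by auto
    next
      assume "conf N p' q' XL YL"
      then show ?thesis using pq(2) val_comm[of ?G N p q] by auto
    qed
  qed
  have "Uset N y r XL + Uset N y r YL = max (Uset N y r X1 + Uset N y r Y1) (Uset N y r X2 + Uset N y r Y2)"
    using step1 step2 step3 unfolding max_def by (auto split: if_splits)
  then show ?thesis unfolding XL_def YL_def X1_def Y1_def X2_def Y2_def A_def B_def .
qed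

end
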